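(* Let $(G,g)$ be a five-dimensional semi-Riemannian Lie group with a subgroup $K\cong\mathrm{SU}(2)$ generating a left-invariant conformal foliation $\mathcal F$ on $G$. Let $\mathfrak g=\mathfrak{su}(2)\oplus\mathfrak m$ be the orthogonal decomposition of the Lie algebra of $G$ and let $\{A,B,C,X,Y\}$ be an orthonormal basis for $\mathfrak g$ such that $A,B,C$ generate $\mathfrak{su}(2)$ with $[A,B]=2C$, $[C,A]=2B$, $[B,C]=2A$. In this setting the brackets have the form $[A,X]=-b_{11}B-c_{11}C$, $[A,Y]=-b_{21}B-c_{21}C$, $[B,X]=b_{11}A-c_{12}C$, $[B,Y]=b_{21}A-c_{22}C$, $[C,X]=c_{11}A+c_{12}B$, $[C,Y]=c_{21}A+c_{22}B$ for real numbers $b_{11},b_{21},c_{11},c_{12},c_{21},c_{22}$. Then the foliation $\mathcal F$ is semi-Riemannian and minimal. It is totally geodesic if and only if $$0=(\varepsilon_B-\varepsilon_A)b_{11}=(\varepsilon_B-\varepsilon_A)b_{21}=(\varepsilon_C-\varepsilon_A)c_{11}=(\varepsilon_C-\varepsilon_A)c_{21}=(\varepsilon_C-\varepsilon_B)c_{12}=(\varepsilon_C-\varepsilon_B)c_{22}.$$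
   Context: A semi-Riemannian Lie group $(G,g)$ is a Lie group with a left-invariant non-degenerate metric $g$ of arbitrary signature; its Lie algebra is identified with the left-invariant vector fields. The subgroup $K$ generates the left-invariant foliation $\mathcal F$ by left translates of $K$, with tangent distribution $\mathcal V$ spanned by $\mathfrak{su}(2)$ and orthogonal complement $\mathcal H$ spanned by $\mathfrak m$; $\mathcal V,\mathcal H$ also denote orthogonal projections. Orthonormal means $g(E_i,E_j)=\varepsilon_{E_i}\delta_{ij}$, $\varepsilon_{E_i}=g(E_i,E_i)\in\{\pm1\}$. With $\nabla$ the Levi-Civita connection: $B^{\mathcal H}(E,F)=\tfrac12\mathcal V(\nabla_EF+\nabla_FE)$ ($E,F\in\mathcal H$), $B^{\mathcal V}(E,F)=\tfrac12\mathcal H(\nabla_EF+\nabla_FE)$ ($E,F\in\mathcal V$). $\mathcal F$ is conformal if $B^{\mathcal H}=g\otimes V$ for some vector field $V$ in $\mathcal V$, semi-Riemannian if $B^{\mathcal H}=0$, minimal if $\sum_k\varepsilon_{V_k}B^{\mathcal V}(V_k,V_k)=0$ for an orthonormal basis $\{V_k\}$ of $\mathcal V$, and totally geodesic if $B^{\mathcal V}=0$. *)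

theory Defs
  imports "HOL-Analysis.Analysis"
begin

text \<open>Lie-algebra level model of a left-invariant foliation on a semi-Riemannian
Lie group.  The Lie algebra is a real vector space 'v with bracket br, the
left-invariant metric is a bilinear form g, and nabla is the Levi-Civita
connection restricted to left-invariant vector fields (characterised by the
Koszul formula in the theorem).  Vs / Hs are orthonormal bases of the vertical
and horizontal distributions.\<close>

definition orthonormal_set :: "('v \<Rightarrow> 'v \<Rightarrow> real) \<Rightarrow> 'v set \<Rightarrow> bool" where
  "orthonormal_set g S \<longleftrightarrow>
     (\<forall>u\<in>S. \<forall>v\<in>S. u \<noteq> v \<longrightarrow> g u v = 0) \<and> (\<forall>u\<in>S. g u u = 1 \<or> g u u = -1)"

text \<open>Orthogonal projection onto the span of an orthonormal list es
  (division by g e e is multiplication by the sign epsilon_e).\<close>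
definition oproj :: "('v \<Rightarrow> 'v \<Rightarrow> real) \<Rightarrow> 'v list \<Rightarrow> 'v \<Rightarrow> 'v::real_vector" where
  "oproj g es Z = (\<Sum>e\<leftarrow>es. (g Z e / g e e) *\<^sub>R e)"

definition sff :: "('v \<Rightarrow> 'v \<Rightarrow> real) \<Rightarrow> ('v \<Rightarrow> 'v \<Rightarrow> 'v) \<Rightarrow> 'v list \<Rightarrow> 'v \<Rightarrow> 'v \<Rightarrow> 'v::real_vector" where
  "sff g nabla es E F = (1/2) *\<^sub>R oproj g es (nabla E F + nabla F E)"

text \<open>B^H uses projection onto the vertical span Vs, for E,F horizontal;
  B^V uses projection onto the horizontal span Hs, for E,F vertical.\<close>

definition conformal_fol ::
  "('v::real_vector \<Rightarrow> 'v \<Rightarrow> real) \<Rightarrow> ('v \<Rightarrow> 'v \<Rightarrow> 'v) \<Rightarrow> 'v list \<Rightarrow> 'v list \<Rightarrow> bool" where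
  "conformal_fol g nabla Vs Hs \<longleftrightarrow>
     (\<exists>V\<in>span (set Vs). \<forall>E\<in>span (set Hs). \<forall>F\<in>span (set Hs).
        sff g nabla Vs E F = g E F *\<^sub>R V)"

definition semi_riemannian_fol ::
  "('v::real_vector \<Rightarrow> 'v \<Rightarrow> real) \<Rightarrow> ('v \<Rightarrow> 'v \<Rightarrow> 'v) \<Rightarrow> 'v list \<Rightarrow> 'v list \<Rightarrow> bool" where
  "semi_riemannian_fol g nabla Vs Hs \<longleftrightarrow>
     (\<forall>E\<in>span (set Hs). \<forall>F\<in>span (set Hs). sff g nabla Vs E F = 0)"

definition minimal_fol ::
  "('v::real_vector \<Rightarrow> 'v \<Rightarrow> real) \<Rightarrow> ('v \<Rightarrow> 'v \<Rightarrow> 'v) \<Rightarrow> 'v list \<Rightarrow> 'v list \<Rightarrow> bool" where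
  "minimal_fol g nabla Vs Hs \<longleftrightarrow>
     (\<Sum>e\<leftarrow>Vs. g e e *\<^sub>R sff g nabla Hs e e) = 0"

definition totally_geodesic_fol ::
  "('v::real_vector \<Rightarrow> 'v \<Rightarrow> real) \<Rightarrow> ('v \<Rightarrow> 'v \<Rightarrow> 'v) \<Rightarrow> 'v list \<Rightarrow> 'v list \<Rightarrow> bool" where
  "totally_geodesic_fol g nabla Vs Hs \<longleftrightarrow>
     (\<forall>E\<in>span (set Vs). \<forall>F\<in>span (set Vs). sff g nabla Hs E F = 0)"

end

theory Submission
  imports Defs
begin

lemma span2: "(E::'v::real_vector) \<in> span {X,Y} \<Longrightarrow> \<exists>a b. E = a *\<^sub>R X + b *\<^sub>R Y"
  by (auto simp: span_insert span_singleton) (metis diff_add_cancel add.commute)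

lemma span3: "(E::'v::real_vector) \<in> span {A,B,C} \<Longrightarrow> \<exists>a b c. E = a *\<^sub>R A + b *\<^sub>R B + c *\<^sub>R C"
  apply (auto simp: span_insert span_singleton)
  by (metis add.commute add.left_commute diff_add_cancel)

theorem theorem4p2:
  fixes br :: "'v::real_vector \<Rightarrow> 'v \<Rightarrow> 'v"
    and g :: "'v \<Rightarrow> 'v \<Rightarrow> real"
    and nabla :: "'v \<Rightarrow> 'v \<Rightarrow> 'v"
    and A B C X Y :: 'v
    and b11 b21 c11 c12 c21 c22 :: real
  assumes br_bilinear: "bilinear br"
    and br_antisym: "\<forall>u v. br u v = - br v u"
    and br_jacobi: "\<forall>u v w. br u (br v w) + br v (br w u) + br w (br u v) = 0"
    and g_bilinear: "bilinear g"
    and g_sym: "\<forall>u v. g u v = g v u"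
    and basis_distinct: "distinct [A, B, C, X, Y]"
    and basis_span: "span {A, B, C, X, Y} = UNIV"
    and basis_on: "orthonormal_set g {A, B, C, X, Y}"
    and levi_civita: "\<forall>E F Z. 2 * g (nabla E F) Z = g (br E F) Z - g (br F Z) E + g (br Z E) F"
    and su2_AB: "br A B = 2 *\<^sub>R C"
    and su2_CA: "br C A = 2 *\<^sub>R B"
    and su2_BC: "br B C = 2 *\<^sub>R A"
    and AX: "br A X = - (b11 *\<^sub>R B) - c11 *\<^sub>R C"
    and AY: "br A Y = - (b21 *\<^sub>R B) - c21 *\<^sub>R C"
    and BX: "br B X = b11 *\<^sub>R A - c12 *\<^sub>R C"
    and BY: "br B Y = b21 *\<^sub>R A - c22 *\<^sub>R C"
    and CX: "br C X = c11 *\<^sub>R A + c12 *\<^sub>R B"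
    and CY: "br C Y = c21 *\<^sub>R A + c22 *\<^sub>R B"
    and conformal: "conformal_fol g nabla [A, B, C] [X, Y]"
  shows "semi_riemannian_fol g nabla [A, B, C] [X, Y]
       \<and> minimal_fol g nabla [A, B, C] [X, Y]
       \<and> (totally_geodesic_fol g nabla [A, B, C] [X, Y] \<longleftrightarrow>
            ((g B B - g A A) * b11 = 0 \<and> (g B B - g A A) * b21 = 0
           \<and> (g C C - g A A) * c11 = 0 \<and> (g C C - g A A) * c21 = 0
           \<and> (g C C - g B B) * c12 = 0 \<and> (g C C - g B B) * c22 = 0))"
proof -
  note gs = bilinear_ladd[OF g_bilinear] bilinear_radd[OF g_bilinear]
    bilinear_lmul[OF g_bilinear] bilinear_rmul[OF g_bilinear]
    bilinear_lneg[OF g_bilinear] bilinear_rneg[OF g_bilinear]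
    bilinear_lsub[OF g_bilinear] bilinear_rsub[OF g_bilinear]
    bilinear_lzero[OF g_bilinear] bilinear_rzero[OF g_bilinear]
  note bs = bilinear_ladd[OF br_bilinear] bilinear_radd[OF br_bilinear]
    bilinear_lmul[OF br_bilinear] bilinear_rmul[OF br_bilinear]
    bilinear_lneg[OF br_bilinear] bilinear_rneg[OF br_bilinear]
    bilinear_lsub[OF br_bilinear] bilinear_rsub[OF br_bilinear]
    bilinear_lzero[OF br_bilinear] bilinear_rzero[OF br_bilinear]
  have key: "g (nabla E F + nabla F E) Z = g (br Z E) F + g (br Z F) E" for E F Z
  proof -
    have "2 * g (nabla E F) Z + 2 * g (nabla F E) Z = 2 * g (br Z E) F + 2 * g (br Z F) E"
    proof -
      have 1: "2 * g (nabla E F) Z = g (br E F) Z - g (br F Z) E + g (br Z E) F"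
        and 2: "2 * g (nabla F E) Z = g (br F E) Z - g (br E Z) F + g (br Z F) E"
        using levi_civita by blast+
      have 3: "g (br F E) Z = - g (br E F) Z" "g (br E Z) F = - g (br Z E) F"
        "g (br F Z) E = - g (br Z F) E"
        using br_antisym bilinear_lneg[OF g_bilinear] by metis+
      show ?thesis using 1 2 3 by linarith
    qed
    then show ?thesis using gs by simp
  qed
  have sffE: "sff g nabla es E F = (1/2) *\<^sub>R (\<Sum>e\<leftarrow>es. ((g (br e E) F + g (br e F) E) / g e e) *\<^sub>R e)"
    for es E F unfolding sff_def oproj_def key by simp
  have o: "\<And>u v. u \<in> {A,B,C,X,Y} \<Longrightarrow> v \<in> {A,B,C,X,Y} \<Longrightarrow> u \<noteq> v \<Longrightarrow> g u v = 0"
    and n: "\<And>u. u \<in> {A,B,C,X,Y} \<Longrightarrow> g u u = 1 \<or> g u u = -1"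
    using basis_on unfolding orthonormal_set_def by auto
  have d: "A \<noteq> B" "A \<noteq> C" "A \<noteq> X" "A \<noteq> Y" "B \<noteq> C" "B \<noteq> X" "B \<noteq> Y" "C \<noteq> X" "C \<noteq> Y" "X \<noteq> Y"
    using basis_distinct by auto
  have z: "g A B = 0" "g A C = 0" "g A X = 0" "g A Y = 0" "g B C = 0" "g B X = 0" "g B Y = 0"
     "g C X = 0" "g C Y = 0" "g X Y = 0"
     "g B A = 0" "g C A = 0" "g X A = 0" "g Y A = 0" "g C B = 0" "g X B = 0" "g Y B = 0"
     "g X C = 0" "g Y C = 0" "g Y X = 0"
    using o d by auto
  have nz: "g A A \<noteq> 0" "g B B \<noteq> 0" "g C C \<noteq> 0" "g X X \<noteq> 0" "g Y Y \<noteq> 0"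
    using n by fastforce+
  have brs: "br X A = b11 *\<^sub>R B + c11 *\<^sub>R C" "br Y A = b21 *\<^sub>R B + c21 *\<^sub>R C"
    "br X B = - (b11 *\<^sub>R A) + c12 *\<^sub>R C" "br Y B = - (b21 *\<^sub>R A) + c22 *\<^sub>R C"
    "br X C = - (c11 *\<^sub>R A) - c12 *\<^sub>R B" "br Y C = - (c21 *\<^sub>R A) - c22 *\<^sub>R B"
    "br B A = - (2 *\<^sub>R C)" "br A C = - (2 *\<^sub>R B)" "br C B = - (2 *\<^sub>R A)"
    using br_antisym[rule_format, of X A] br_antisym[rule_format, of Y A]
      br_antisym[rule_format, of X B] br_antisym[rule_format, of Y B]
      br_antisym[rule_format, of X C] br_antisym[rule_format, of Y C]
      br_antisym[rule_format, of B A] br_antisym[rule_format, of A C] br_antisym[rule_format, of C B]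
      AX AY BX BY CX CY su2_AB su2_BC su2_CA by simp_all
  have brz: "br u u = 0" for u
  proof -
    have "br u u + br u u = 0" using br_antisym[rule_format, of u u] by (metis add.right_inverse)
    then have "2 *\<^sub>R br u u = 0" by (simp add: scaleR_2)
    then show ?thesis by simp
  qed
  have S1: "semi_riemannian_fol g nabla [A, B, C] [X, Y]"
    unfolding semi_riemannian_fol_def
  proof (intro ballI)
    fix E F assume "E \<in> span (set [X, Y])" "F \<in> span (set [X, Y])"
    then obtain a b a' b' where E: "E = a *\<^sub>R X + b *\<^sub>R Y" and F: "F = a' *\<^sub>R X + b' *\<^sub>R Y"
      using span2 by (metis empty_set list.simps(15))
    show "sff g nabla [A, B, C] E F = 0"
      unfolding sffE E F using AX AY BX BY CX CY z by (simp add: gs bs)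
  qed
  have S2: "minimal_fol g nabla [A, B, C] [X, Y]"
    unfolding minimal_fol_def sffE using brs z by (simp add: gs bs)
  have S3: "totally_geodesic_fol g nabla [A, B, C] [X, Y] \<longleftrightarrow>
            ((g B B - g A A) * b11 = 0 \<and> (g B B - g A A) * b21 = 0
           \<and> (g C C - g A A) * c11 = 0 \<and> (g C C - g A A) * c21 = 0
           \<and> (g C C - g B B) * c12 = 0 \<and> (g C C - g B B) * c22 = 0)"
  proof
    assume tg: "totally_geodesic_fol g nabla [A, B, C] [X, Y]"
    have inA: "A \<in> span (set [A,B,C])" "B \<in> span (set [A,B,C])" "C \<in> span (set [A,B,C])"
      by (auto intro: span_base)
    have h: "g (sff g nabla [X, Y] E F) X = 0" "g (sff g nabla [X, Y] E F) Y = 0"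
      if "E \<in> span (set [A,B,C])" "F \<in> span (set [A,B,C])" for E F
      using tg that unfolding totally_geodesic_fol_def by (simp_all add: gs)
    have "g (sff g nabla [X, Y] A B) X = 0" "g (sff g nabla [X, Y] A B) Y = 0"
         "g (sff g nabla [X, Y] A C) X = 0" "g (sff g nabla [X, Y] A C) Y = 0"
         "g (sff g nabla [X, Y] B C) X = 0" "g (sff g nabla [X, Y] B C) Y = 0"
      using h inA by blast+
    then show "((g B B - g A A) * b11 = 0 \<and> (g B B - g A A) * b21 = 0
           \<and> (g C C - g A A) * c11 = 0 \<and> (g C C - g A A) * c21 = 0
           \<and> (g C C - g B B) * c12 = 0 \<and> (g C C - g B B) * c22 = 0)"
      unfolding sffE using brs z nz by (simp add: gs bs algebra_simps)
  next
    assume cond: "((g B B - g A A) * b11 = 0 \<and> (g B B - g A A) * b21 = 0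
           \<and> (g C C - g A A) * c11 = 0 \<and> (g C C - g A A) * c21 = 0
           \<and> (g C C - g B B) * c12 = 0 \<and> (g C C - g B B) * c22 = 0)"
    show "totally_geodesic_fol g nabla [A, B, C] [X, Y]"
      unfolding totally_geodesic_fol_def
    proof (intro ballI)
      fix E F assume "E \<in> span (set [A, B, C])" "F \<in> span (set [A, B, C])"
      then obtain a b c a' b' c' where E: "E = a *\<^sub>R A + b *\<^sub>R B + c *\<^sub>R C"
        and F: "F = a' *\<^sub>R A + b' *\<^sub>R B + c' *\<^sub>R C"
        using span3 by (metis empty_set list.simps(15))
      have sA: "g A A = 1 \<or> g A A = -1" and sB: "g B B = 1 \<or> g B B = -1"
        and sC: "g C C = 1 \<or> g C C = -1" using n by auto
      show "sff g nabla [X, Y] E F = 0"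
        unfolding sffE E F using cond sA sB sC
        by (elim disjE; simp add: gs bs brs z brz algebra_simps)
    qed
  qed
  show ?thesis using S1 S2 S3 by blast
qed

end
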